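(* On $\mathbb R^8$ with coframe $e^0,\dots,e^7$, let $\Omega=(e^4+ie^0)\wedge(e^1+ie^5)\wedge(e^2+ie^6)\wedge(e^3+ie^7)$, $\omega=e^{15}+e^{26}+e^{37}+e^{40}$, and for $\tau\in\mathbb R$ let $\Phi_\tau=\cosh(2\tau)\mathrm{Re}(\Omega)-\tfrac12\omega\wedge\omega+i\sinh(2\tau)\mathrm{Im}(\Omega)$. For $\tau\neq0$, the stabiliser of $\Phi_\tau$ in $\mathrm{GL}(8,\mathbb R)$ (acting by pullback) is the group $\mathrm{SU}(4)$ of linear maps preserving the Euclidean metric $g=\sum_a(e^a)^2$, $\omega$ and $\Omega$.
   Context: Notation: $e^{ab}=e^a\wedge e^b$. For $\tau=0$, $\Phi_0$ is the (real) Cayley form, whose stabiliser is $\mathrm{Spin}(7)$. *)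

theory Defs
  imports "HOL-Analysis.Analysis"
begin

text \<open>Vectors of R^8 are real^8 with components indexed by the numeral type 8 = {0,...,7}.
  Complex-valued k-forms are represented as alternating multilinear functions of k vectors.\<close>

type_synonym form1 = "real^8 \<Rightarrow> complex"
type_synonym form2 = "real^8 \<Rightarrow> real^8 \<Rightarrow> complex"
type_synonym form4 = "real^8 \<Rightarrow> real^8 \<Rightarrow> real^8 \<Rightarrow> real^8 \<Rightarrow> complex"

definition cof :: "8 \<Rightarrow> form1" where
  "cof a = (\<lambda>v. complex_of_real (v $ a))"

definition wedge11 :: "form1 \<Rightarrow> form1 \<Rightarrow> form2" where
  "wedge11 \<alpha> \<beta> = (\<lambda>v w. \<alpha> v * \<beta> w - \<alpha> w * \<beta> v)"

text \<open>Wedge of 2-forms: (a \<and> b)(v_0..v_3) = 1/(2!2!) sum_sigma sgn(sigma) a(v_s0,v_s1) b(v_s2,v_s3),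
  so that e^{ab} \<and> e^{cd} = e^{abcd}.\<close>
definition wedge22 :: "form2 \<Rightarrow> form2 \<Rightarrow> form4" where
  "wedge22 \<alpha> \<beta> = (\<lambda>v0 v1 v2 v3. let v = [v0, v1, v2, v3] in
     (1/4) * (\<Sum>\<sigma>\<in>{\<sigma>. \<sigma> permutes {..<4::nat}}.
        of_int (sign \<sigma>) * \<alpha> (v ! \<sigma> 0) (v ! \<sigma> 1) * \<beta> (v ! \<sigma> 2) (v ! \<sigma> 3)))"

definition cplx1 :: "form1 \<Rightarrow> form1 \<Rightarrow> form1" where
  "cplx1 \<alpha> \<beta> = (\<lambda>v. \<alpha> v + \<i> * \<beta> v)"

definition Omega :: form4 where
  "Omega = wedge22 (wedge11 (cplx1 (cof 4) (cof 0)) (cplx1 (cof 1) (cof 5)))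
                   (wedge11 (cplx1 (cof 2) (cof 6)) (cplx1 (cof 3) (cof 7)))"

definition omega :: form2 where
  "omega = (\<lambda>v w. wedge11 (cof 1) (cof 5) v w + wedge11 (cof 2) (cof 6) v w
                 + wedge11 (cof 3) (cof 7) v w + wedge11 (cof 4) (cof 0) v w)"

definition Phi :: "real \<Rightarrow> form4" where
  "Phi \<tau> = (\<lambda>v0 v1 v2 v3.
      complex_of_real (cosh (2 * \<tau>) * Re (Omega v0 v1 v2 v3))
      - (1/2) * wedge22 omega omega v0 v1 v2 v3
      + \<i> * complex_of_real (sinh (2 * \<tau>) * Im (Omega v0 v1 v2 v3)))"

definition pull2 :: "real^8^8 \<Rightarrow> form2 \<Rightarrow> form2" where
  "pull2 A \<phi> = (\<lambda>v w. \<phi> (A *v v) (A *v w))"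

definition pull4 :: "real^8^8 \<Rightarrow> form4 \<Rightarrow> form4" where
  "pull4 A \<phi> = (\<lambda>v0 v1 v2 v3. \<phi> (A *v v0) (A *v v1) (A *v v2) (A *v v3))"

definition stab4 :: "form4 \<Rightarrow> (real^8^8) set" where
  "stab4 \<phi> = {A. invertible A \<and> pull4 A \<phi> = \<phi>}"

definition SU4 :: "(real^8^8) set" where
  "SU4 = {A. invertible A \<and> (\<forall>v w. (A *v v) \<bullet> (A *v w) = v \<bullet> w)
            \<and> pull2 A omega = omega \<and> pull4 A Omega = Omega}"

end

theory Submission
  imports Defs
begin



lemma perm_ins_sign:
  assumes "finite S" "a \<notin> S"
  shows "(\<Sum>\<sigma>\<in>{\<sigma>. \<sigma> permutes insert a S}. (of_int (sign \<sigma>) :: complex) * F \<sigma>) =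
    (\<Sum>b\<in>insert a S. \<Sum>q\<in>{q. q permutes S}. of_int (sign q) * ((if a = b then 1 else -1) * F (Transposition.transpose a b \<circ> q)))"
proof -
  have "(\<Sum>\<sigma>\<in>{\<sigma>. \<sigma> permutes insert a S}. (of_int (sign \<sigma>) :: complex) * F \<sigma>) =
    (\<Sum>b\<in>insert a S. \<Sum>q\<in>{q. q permutes S}. of_int (sign (Transposition.transpose a b \<circ> q)) * F (Transposition.transpose a b \<circ> q))"
    by (rule sum_over_permutations_insert[OF assms])
  also have "\<dots> = (\<Sum>b\<in>insert a S. \<Sum>q\<in>{q. q permutes S}. of_int (sign q) * ((if a = b then 1 else -1) * F (Transposition.transpose a b \<circ> q)))"
  proof (intro sum.cong refl)
    fix b q assume "q \<in> {q. q permutes S}"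
    then have "permutation q" using assms(1) permutation_permutes by blast
    then have "sign (Transposition.transpose a b \<circ> q) = sign (Transposition.transpose a b) * sign q"
      by (simp add: sign_compose permutation_swap_id)
    then show "of_int (sign (Transposition.transpose a b \<circ> q)) * F (Transposition.transpose a b \<circ> q) =
      of_int (sign q) * ((if a = b then 1 else -1) * F (Transposition.transpose a b \<circ> q))"
      by (simp add: sign_swap_id)
  qed
  finally show ?thesis .
qed

lemma perm4_sum:
  "(\<Sum>\<sigma>\<in>{\<sigma>. \<sigma> permutes {..<4::nat}}. (of_int (sign \<sigma>) :: complex) * G (\<sigma> 0) (\<sigma> 1) (\<sigma> 2) (\<sigma> 3)) =
   G 0 1 2 3 - G 0 1 3 2 - G 0 2 1 3 + G 0 2 3 1 + G 0 3 1 2 - G 0 3 2 1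
  - G 1 0 2 3 + G 1 0 3 2 + G 1 2 0 3 - G 1 2 3 0 - G 1 3 0 2 + G 1 3 2 0
  + G 2 0 1 3 - G 2 0 3 1 - G 2 1 0 3 + G 2 1 3 0 + G 2 3 0 1 - G 2 3 1 0
  - G 3 0 1 2 + G 3 0 2 1 + G 3 1 0 2 - G 3 1 2 0 - G 3 2 0 1 + G 3 2 1 0"
proof -
  have e: "{..<4::nat} = insert 0 (insert 1 (insert 2 (insert 3 {})))" by auto
  show ?thesis
    unfolding e
    apply (subst perm_ins_sign, simp, simp)
    apply (subst perm_ins_sign, simp, simp)
    apply (subst perm_ins_sign, simp, simp)
    apply (subst perm_ins_sign, simp, simp)
    apply (simp add: permutes_empty Transposition.transpose_def)
    done
qed



lemma all8: "(\<forall>i::8. P i) \<longleftrightarrow> P 0 \<and> P 1 \<and> P 2 \<and> P 3 \<and> P 4 \<and> P 5 \<and> P 6 \<and> P 7"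
proof -
  have d8: "distinct [0,1,2,3,4,5,6,7::8]" by simp
  have "card (set [0,1,2,3,4,5,6,7::8]) = 8" using distinct_card[OF d8] by simp
  then have U: "(UNIV :: 8 set) = {0,1,2,3,4,5,6,7}"
    using card_subset_eq[of "UNIV::8 set" "set [0,1,2,3,4,5,6,7::8]"] by simp
  have "(\<forall>i::8. P i) \<longleftrightarrow> (\<forall>i\<in>UNIV. P i)" by simp
  also have "\<dots> \<longleftrightarrow> P 0 \<and> P 1 \<and> P 2 \<and> P 3 \<and> P 4 \<and> P 5 \<and> P 6 \<and> P 7" unfolding U by simp
  finally show ?thesis .
qed

lemma sum8: "(\<Sum>i\<in>(UNIV::8 set). f i) = f 0 + f 1 + f 2 + f 3 + f 4 + f 5 + f 6 + f 7"
proof -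
  have d8: "distinct [0,1,2,3,4,5,6,7::8]" by simp
  have "card (set [0,1,2,3,4,5,6,7::8]) = 8" using distinct_card[OF d8] by simp
  then have U: "(UNIV :: 8 set) = {0,1,2,3,4,5,6,7}"
    using card_subset_eq[of "UNIV::8 set" "set [0,1,2,3,4,5,6,7::8]"] by simp
  show ?thesis unfolding U by (simp add: add.assoc)
qed

lemma vec8_eq: "(x::'a^8) = y \<longleftrightarrow> x$0=y$0 \<and> x$1=y$1 \<and> x$2=y$2 \<and> x$3=y$3 \<and> x$4=y$4 \<and> x$5=y$5 \<and> x$6=y$6 \<and> x$7=y$7"
  unfolding vec_eq_iff all8 ..

lemma inner8: "(x::real^8) \<bullet> y = x$0*y$0 + x$1*y$1 + x$2*y$2+x$3*y$3+x$4*y$4+x$5*y$5+x$6*y$6+x$7*y$7"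
  by (simp add: inner_vec_def sum8)

lemma perm4_sum2:
  "(\<Sum>\<sigma>\<in>{\<sigma>. \<sigma> permutes {..<4::nat}}. (of_int (sign \<sigma>) :: complex) * F (\<sigma> 0) (\<sigma> 1) * H (\<sigma> 2) (\<sigma> 3)) =
   F 0 1 * H 2 3 - F 0 1 * H 3 2 - F 0 2 * H 1 3 + F 0 2 * H 3 1 + F 0 3 * H 1 2 - F 0 3 * H 2 1
  - F 1 0 * H 2 3 + F 1 0 * H 3 2 + F 1 2 * H 0 3 - F 1 2 * H 3 0 - F 1 3 * H 0 2 + F 1 3 * H 2 0
  + F 2 0 * H 1 3 - F 2 0 * H 3 1 - F 2 1 * H 0 3 + F 2 1 * H 3 0 + F 2 3 * H 0 1 - F 2 3 * H 1 0
  - F 3 0 * H 1 2 + F 3 0 * H 2 1 + F 3 1 * H 0 2 - F 3 1 * H 2 0 - F 3 2 * H 0 1 + F 3 2 * H 1 0"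
  using perm4_sum[of "\<lambda>i j k l. F i j * H k l"] by (simp add: mult.assoc)

lemma wedge22_eval: "wedge22 \<alpha> \<beta> v0 v1 v2 v3 = (1/4) * (
     \<alpha> v0 v1 * \<beta> v2 v3 - \<alpha> v0 v1 * \<beta> v3 v2 - \<alpha> v0 v2 * \<beta> v1 v3 + \<alpha> v0 v2 * \<beta> v3 v1 + \<alpha> v0 v3 * \<beta> v1 v2 - \<alpha> v0 v3 * \<beta> v2 v1
  - \<alpha> v1 v0 * \<beta> v2 v3 + \<alpha> v1 v0 * \<beta> v3 v2 + \<alpha> v1 v2 * \<beta> v0 v3 - \<alpha> v1 v2 * \<beta> v3 v0 - \<alpha> v1 v3 * \<beta> v0 v2 + \<alpha> v1 v3 * \<beta> v2 v0
  + \<alpha> v2 v0 * \<beta> v1 v3 - \<alpha> v2 v0 * \<beta> v3 v1 - \<alpha> v2 v1 * \<beta> v0 v3 + \<alpha> v2 v1 * \<beta> v3 v0 + \<alpha> v2 v3 * \<beta> v0 v1 - \<alpha> v2 v3 * \<beta> v1 v0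
  - \<alpha> v3 v0 * \<beta> v1 v2 + \<alpha> v3 v0 * \<beta> v2 v1 + \<alpha> v3 v1 * \<beta> v0 v2 - \<alpha> v3 v1 * \<beta> v2 v0 - \<alpha> v3 v2 * \<beta> v0 v1 + \<alpha> v3 v2 * \<beta> v1 v0)"
  unfolding wedge22_def Let_def
  using perm4_sum2[of "\<lambda>i j. \<alpha> ([v0,v1,v2,v3] ! i) ([v0,v1,v2,v3] ! j)" "\<lambda>i j. \<beta> ([v0,v1,v2,v3] ! i) ([v0,v1,v2,v3] ! j)"]
  by simp

definition th :: "real^8 \<Rightarrow> nat \<Rightarrow> complex" where
  "th x k = (if k = 0 then Complex (x$4) (x$0) else if k = 1 then Complex (x$1) (x$5)
     else if k = 2 then Complex (x$2) (x$6) else Complex (x$3) (x$7))"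

definition det4 :: "(nat \<Rightarrow> complex) \<Rightarrow> (nat \<Rightarrow> complex) \<Rightarrow> (nat \<Rightarrow> complex) \<Rightarrow> (nat \<Rightarrow> complex) \<Rightarrow> complex" where
  "det4 a b c d =
   a 0 * b 1 * c 2 * d 3 - a 0 * b 1 * c 3 * d 2 - a 0 * b 2 * c 1 * d 3 + a 0 * b 2 * c 3 * d 1 + a 0 * b 3 * c 1 * d 2 - a 0 * b 3 * c 2 * d 1
  - a 1 * b 0 * c 2 * d 3 + a 1 * b 0 * c 3 * d 2 + a 1 * b 2 * c 0 * d 3 - a 1 * b 2 * c 3 * d 0 - a 1 * b 3 * c 0 * d 2 + a 1 * b 3 * c 2 * d 0
  + a 2 * b 0 * c 1 * d 3 - a 2 * b 0 * c 3 * d 1 - a 2 * b 1 * c 0 * d 3 + a 2 * b 1 * c 3 * d 0 + a 2 * b 3 * c 0 * d 1 - a 2 * b 3 * c 1 * d 0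
  - a 3 * b 0 * c 1 * d 2 + a 3 * b 0 * c 2 * d 1 + a 3 * b 1 * c 0 * d 2 - a 3 * b 1 * c 2 * d 0 - a 3 * b 2 * c 0 * d 1 + a 3 * b 2 * c 1 * d 0"

lemma cp0: "cplx1 (cof 4) (cof 0) v = th v 0" by (simp add: cplx1_def cof_def th_def Complex_eq)
lemma cp1: "cplx1 (cof 1) (cof 5) v = th v 1" by (simp add: cplx1_def cof_def th_def Complex_eq)
lemma cp2: "cplx1 (cof 2) (cof 6) v = th v 2" by (simp add: cplx1_def cof_def th_def Complex_eq)
lemma cp3: "cplx1 (cof 3) (cof 7) v = th v 3" by (simp add: cplx1_def cof_def th_def Complex_eq)

lemma Omega_det: "Omega v0 v1 v2 v3 = det4 (th v0) (th v1) (th v2) (th v3)"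
  unfolding Omega_def wedge22_eval wedge11_def cp0 cp1 cp2 cp3 det4_def
  by (simp add: algebra_simps)





definition om :: "real^8 \<Rightarrow> real^8 \<Rightarrow> real" where
  "om x y = x$1*y$5 - x$5*y$1 + x$2*y$6 - x$6*y$2 + x$3*y$7 - x$7*y$3 + x$4*y$0 - x$0*y$4"

lemma omega_om: "omega x y = complex_of_real (om x y)"
  by (simp add: omega_def wedge11_def cof_def om_def)

definition Qf :: "(real^8 \<Rightarrow> real^8 \<Rightarrow> real) \<Rightarrow> real^8 \<Rightarrow> real^8 \<Rightarrow> real^8 \<Rightarrow> real^8 \<Rightarrow> real" where
  "Qf f v0 v1 v2 v3 = f v0 v1 * f v2 v3 - f v0 v2 * f v1 v3 + f v0 v3 * f v1 v2"

lemma om_antisym: "om y x = - om x y" by (simp add: om_def)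

lemma wedge_alt:
  assumes "\<And>x y. \<eta> y x = - \<eta> x y"
  shows "wedge22 \<eta> \<eta> v0 v1 v2 v3 = 2 * (\<eta> v0 v1 * \<eta> v2 v3 - \<eta> v0 v2 * \<eta> v1 v3 + \<eta> v0 v3 * \<eta> v1 v2)"
  unfolding wedge22_eval assms[of v0 v1] assms[of v0 v2] assms[of v0 v3] assms[of v1 v2] assms[of v1 v3] assms[of v2 v3]
  by algebra

lemma wedge_om: "wedge22 omega omega v0 v1 v2 v3 = complex_of_real (2 * Qf om v0 v1 v2 v3)"
proof -
  have e: "\<And>x y. omega y x = - omega x y" by (simp add: omega_om om_def)
  show ?thesis unfolding wedge_alt[OF e] by (simp add: omega_om Qf_def)
qed

lemma Phi_eq: "Phi \<tau> v0 v1 v2 v3 = Complex (cosh (2*\<tau>) * Re (Omega v0 v1 v2 v3) - Qf om v0 v1 v2 v3)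
   (sinh (2*\<tau>) * Im (Omega v0 v1 v2 v3))"
  by (simp add: Phi_def wedge_om complex_eq_iff)

definition Jv :: "real^8 \<Rightarrow> real^8" where
  "Jv x = (\<chi> i. if i = 4 then - x$0 else if i = 0 then x$4 else if i = 1 then - x$5 else if i = 5 then x$1
     else if i = 2 then - x$6 else if i = 6 then x$2 else if i = 3 then - x$7 else x$3)"

lemma Jv_comp: "Jv x $ 0 = x$4" "Jv x $ 1 = - x$5" "Jv x $ 2 = - x$6" "Jv x $ 3 = - x$7"
  "Jv x $ 4 = - x$0" "Jv x $ 5 = x$1" "Jv x $ 6 = x$2" "Jv x $ 7 = x$3"
  by (simp_all add: Jv_def)

lemma th_J: "th (Jv x) k = \<i> * th x k"
  by (simp add: th_def Jv_comp complex_eq_iff)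

lemma th_add: "th (x + y) k = th x k + th y k"
  by (simp add: th_def complex_eq_iff)
lemma th_scale: "th (c *\<^sub>R x) k = complex_of_real c * th x k"
  by (simp add: th_def complex_eq_iff)
lemma th_neg: "th (- x) k = - th x k"
  by (simp add: th_def complex_eq_iff)

definition mk :: "(nat \<Rightarrow> complex) \<Rightarrow> real^8" where
  "mk c = (\<chi> i. if i = 4 then Re (c 0) else if i = 0 then Im (c 0) else if i = 1 then Re (c 1) else if i = 5 then Im (c 1)
     else if i = 2 then Re (c 2) else if i = 6 then Im (c 2) else if i = 3 then Re (c 3) else Im (c 3))"

lemma th_mk: "k < 4 \<Longrightarrow> th (mk c) k = c k"
  by (auto simp: th_def mk_def complex_eq_iff less_Suc_eq numeral_eq_Suc)

lemma th_inj: "(\<And>k. k < 4 \<Longrightarrow> th x k = th y k) \<Longrightarrow> x = y"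
proof -
  assume h: "\<And>k. k < 4 \<Longrightarrow> th x k = th y k"
  have "th x 0 = th y 0" "th x 1 = th y 1" "th x 2 = th y 2" "th x 3 = th y 3" using h by auto
  then show "x = y" by (simp add: th_def complex_eq_iff vec8_eq)
qed

lemma det4_lin1: "det4 (\<lambda>k. c * a k) b d e = c * det4 a b d e"
  by (simp add: det4_def algebra_simps)

lemma L1: "Omega u (Jv u) x y = 0"
  unfolding Omega_det th_J det4_def by algebra

lemma Kre: "Re (Omega x0 x1 x2 x3) = Im (Omega (Jv x0) x1 x2 x3)"
proof -
  have "Omega (Jv x0) x1 x2 x3 = \<i> * Omega x0 x1 x2 x3"
    unfolding Omega_det th_J by (rule det4_lin1)
  then show ?thesis by simp
qed

lemma Omega_neg1: "Omega (- x0) x1 x2 x3 = - Omega x0 x1 x2 x3"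
proof -
  have "Omega (- x0) x1 x2 x3 = (-1) * Omega x0 x1 x2 x3"
    unfolding Omega_det th_neg using det4_lin1[of "-1"] by simp
  then show ?thesis by simp
qed




lemma stab_facts:
  assumes "A \<in> stab4 (Phi \<tau>)" "\<tau> \<noteq> 0"
  shows "invertible A"
    and "\<And>v0 v1 v2 v3. Im (Omega (A *v v0) (A *v v1) (A *v v2) (A *v v3)) = Im (Omega v0 v1 v2 v3)"
    and "\<And>v0 v1 v2 v3. cosh (2*\<tau>) * Re (Omega (A *v v0) (A *v v1) (A *v v2) (A *v v3)) - Qf om (A *v v0) (A *v v1) (A *v v2) (A *v v3)
          = cosh (2*\<tau>) * Re (Omega v0 v1 v2 v3) - Qf om v0 v1 v2 v3"
proof -
  show "invertible A" using assms(1) by (simp add: stab4_def)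
  have P: "pull4 A (Phi \<tau>) = Phi \<tau>" using assms(1) by (simp add: stab4_def)
  fix v0 v1 v2 v3
  have e: "Phi \<tau> (A *v v0) (A *v v1) (A *v v2) (A *v v3) = Phi \<tau> v0 v1 v2 v3"
    using fun_cong[OF fun_cong[OF fun_cong[OF fun_cong[OF P]]], of v0 v1 v2 v3] by (simp add: pull4_def)
  have s: "sinh (2*\<tau>) \<noteq> 0" using assms(2) by simp
  from e show "Im (Omega (A *v v0) (A *v v1) (A *v v2) (A *v v3)) = Im (Omega v0 v1 v2 v3)"
    using s by (simp add: Phi_eq)
  from e show "cosh (2*\<tau>) * Re (Omega (A *v v0) (A *v v1) (A *v v2) (A *v v3)) - Qf om (A *v v0) (A *v v1) (A *v v2) (A *v v3)
          = cosh (2*\<tau>) * Re (Omega v0 v1 v2 v3) - Qf om v0 v1 v2 v3"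
    by (simp add: Phi_eq)
qed

definition U :: "nat \<Rightarrow> nat \<Rightarrow> complex" where "U m = (\<lambda>j. if j = m then 1 else 0)"

lemma minors:
  assumes "\<And>c d. det4 a b c d = 0"
  shows "a 0 * b 1 = a 1 * b 0" "a 0 * b 2 = a 2 * b 0" "a 0 * b 3 = a 3 * b 0"
        "a 1 * b 2 = a 2 * b 1" "a 1 * b 3 = a 3 * b 1" "a 2 * b 3 = a 3 * b 2"
proof -
  have "det4 a b (U 2) (U 3) = 0" "det4 a b (U 1) (U 3) = 0" "det4 a b (U 1) (U 2) = 0"
       "det4 a b (U 0) (U 3) = 0" "det4 a b (U 0) (U 2) = 0" "det4 a b (U 0) (U 1) = 0"
    using assms by auto
  then show "a 0 * b 1 = a 1 * b 0" "a 0 * b 2 = a 2 * b 0" "a 0 * b 3 = a 3 * b 0"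
        "a 1 * b 2 = a 2 * b 1" "a 1 * b 3 = a 3 * b 1" "a 2 * b 3 = a 3 * b 2"
    by (simp_all add: det4_def U_def algebra_simps)
qed

lemma prop_vec:
  assumes "\<And>c d. det4 a b c d = 0" "k < 4" "a k \<noteq> 0"
  shows "\<exists>\<mu>. \<forall>j<4. b j = \<mu> * a j"
proof -
  note m = minors[OF assms(1)]
  have all: "\<And>i j. i < 4 \<Longrightarrow> j < 4 \<Longrightarrow> a i * b j = a j * b i"
  proof -
    fix i j :: nat assume "i < 4" "j < 4"
    then have "i \<in> {0,1,2,3}" "j \<in> {0,1,2,3}" by auto
    then show "a i * b j = a j * b i" using m by (auto simp: algebra_simps)
  qed
  show ?thesis
  proof (intro exI allI impI)
    fix j :: nat assume "j < 4"
    have "a k * b j = a j * b k" using all[OF assms(2) \<open>j<4\<close>] .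
    then show "b j = b k / a k * a j" using assms(3) by (simp add: field_simps)
  qed
qed

lemma det4_mk: "det4 a b (th (mk c)) (th (mk d)) = det4 a b c d"
  by (simp add: det4_def th_mk)

lemma th_zero: "th 0 k = 0" by (simp add: th_def complex_eq_iff)

lemma L2:
  assumes "u \<noteq> 0" "\<And>x y. Im (Omega u w x y) = 0"
  shows "\<exists>s t. w = s *\<^sub>R u + t *\<^sub>R Jv u"
proof -
  have D: "det4 (th u) (th w) c d = 0" for c d
  proof -
    have i1: "Im (det4 (th u) (th w) c d) = 0"
      using assms(2)[of "mk c" "mk d"] by (simp add: Omega_det det4_mk)
    have "Im (det4 (th u) (th w) (\<lambda>k. \<i> * c k) d) = 0"
      using assms(2)[of "mk (\<lambda>k. \<i> * c k)" "mk d"] by (simp add: Omega_det det4_mk)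
    moreover have "det4 (th u) (th w) (\<lambda>k. \<i> * c k) d = \<i> * det4 (th u) (th w) c d"
      by (simp add: det4_def algebra_simps)
    ultimately have "Re (det4 (th u) (th w) c d) = 0" by simp
    with i1 show ?thesis by (simp add: complex_eq_iff)
  qed
  have "\<exists>k<4. th u k \<noteq> 0"
  proof (rule ccontr)
    assume "\<not> (\<exists>k<4. th u k \<noteq> 0)"
    then have "u = 0" by (intro th_inj) (simp add: th_zero)
    with assms(1) show False by simp
  qed
  then obtain k where k: "k < 4" "th u k \<noteq> 0" by auto
  obtain \<mu> where mu: "\<forall>j<4. th w j = \<mu> * th u j" using prop_vec[OF D k] by blast
  have "w = Re \<mu> *\<^sub>R u + Im \<mu> *\<^sub>R Jv u"
  proof (rule th_inj)
    fix j :: nat assume "j < 4"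
    have "th w j = \<mu> * th u j" using mu \<open>j<4\<close> by simp
    also have "\<dots> = complex_of_real (Re \<mu>) * th u j + complex_of_real (Im \<mu>) * (\<i> * th u j)"
      by (simp add: complex_eq_iff algebra_simps)
    finally show "th w j = th (Re \<mu> *\<^sub>R u + Im \<mu> *\<^sub>R Jv u) j"
      by (simp add: th_add th_scale th_J)
  qed
  then show ?thesis by blast
qed


lemma Jv_add: "Jv (x + y) = Jv x + Jv y" by (simp add: vec8_eq Jv_comp)
lemma Jv_scale: "Jv (c *\<^sub>R x) = c *\<^sub>R Jv x" by (simp add: vec8_eq Jv_comp)
lemma Jv_neg: "Jv (- x) = - Jv x" by (simp add: vec8_eq Jv_comp)
lemma Jv_Jv: "Jv (Jv x) = - x" by (simp add: vec8_eq Jv_comp)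
lemma Jv_zero: "Jv 0 = 0" by (simp add: vec8_eq Jv_comp)

lemma expand8: "(v::real^8) = v$0 *\<^sub>R axis 0 1 + v$1 *\<^sub>R axis 1 1 + v$2 *\<^sub>R axis 2 1 + v$3 *\<^sub>R axis 3 1
   + v$4 *\<^sub>R axis 4 1 + v$5 *\<^sub>R axis 5 1 + v$6 *\<^sub>R axis 6 1 + v$7 *\<^sub>R axis 7 1"
  by (simp add: vec8_eq axis_def)

lemma th_axis:
  "th (axis 4 1) 0 = 1" "th (axis 4 1) 1 = 0" "th (axis 4 1) 2 = 0" "th (axis 4 1) 3 = 0"
  "th (axis 1 1) 0 = 0" "th (axis 1 1) 1 = 1" "th (axis 1 1) 2 = 0" "th (axis 1 1) 3 = 0"
  "th (axis 2 1) 0 = 0" "th (axis 2 1) 1 = 0" "th (axis 2 1) 2 = 1" "th (axis 2 1) 3 = 0"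
  "th (axis 3 1) 0 = 0" "th (axis 3 1) 1 = 0" "th (axis 3 1) 2 = 0" "th (axis 3 1) 3 = 1"
  "th (axis 0 1) 0 = \<i>" "th (axis 0 1) 1 = 0" "th (axis 0 1) 2 = 0" "th (axis 0 1) 3 = 0"
  "th (axis 5 1) 0 = 0" "th (axis 5 1) 1 = \<i>" "th (axis 5 1) 2 = 0" "th (axis 5 1) 3 = 0"
  "th (axis 6 1) 0 = 0" "th (axis 6 1) 1 = 0" "th (axis 6 1) 2 = \<i>" "th (axis 6 1) 3 = 0"
  "th (axis 7 1) 0 = 0" "th (axis 7 1) 1 = 0" "th (axis 7 1) 2 = 0" "th (axis 7 1) 3 = \<i>"
  by (simp_all add: th_def axis_def complex_eq_iff)

lemma L3:
  fixes F :: "real^8 \<Rightarrow> nat \<Rightarrow> complex"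
  assumes add: "\<And>x y k. F (x + y) k = F x k + F y k"
    and scl: "\<And>c x k. F (c *\<^sub>R x) k = complex_of_real c * F x k"
    and H: "\<And>v. \<exists>\<mu>. \<forall>k<4. F v k = \<mu> * th v k"
  shows "\<exists>\<mu>0. \<forall>v. \<forall>k<4. F v k = \<mu>0 * th v k"
proof -
  have H4: "\<exists>\<mu>. F v 0 = \<mu> * th v 0 \<and> F v 1 = \<mu> * th v 1 \<and> F v 2 = \<mu> * th v 2 \<and> F v 3 = \<mu> * th v 3" for v
    using H[of v] by auto
  obtain m0 where h0: "F (axis 0 1) 0 = m0 * th (axis 0 1) 0 \<and> F (axis 0 1) 1 = m0 * th (axis 0 1) 1 \<and> F (axis 0 1) 2 = m0 * th (axis 0 1) 2 \<and> F (axis 0 1) 3 = m0 * th (axis 0 1) 3"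
    using H4[of "axis 0 1"] by blast
  have b0: "F (axis 0 1) 0 = m0 * \<i>" "F (axis 0 1) 1 = 0" "F (axis 0 1) 2 = 0" "F (axis 0 1) 3 = 0"
    using h0 by (simp_all only: th_axis mult_1_right mult_zero_right)
  obtain m1 where h1: "F (axis 1 1) 0 = m1 * th (axis 1 1) 0 \<and> F (axis 1 1) 1 = m1 * th (axis 1 1) 1 \<and> F (axis 1 1) 2 = m1 * th (axis 1 1) 2 \<and> F (axis 1 1) 3 = m1 * th (axis 1 1) 3"
    using H4[of "axis 1 1"] by blast
  have b1: "F (axis 1 1) 0 = 0" "F (axis 1 1) 1 = m1" "F (axis 1 1) 2 = 0" "F (axis 1 1) 3 = 0"
    using h1 by (simp_all only: th_axis mult_1_right mult_zero_right)
  obtain m2 where h2: "F (axis 2 1) 0 = m2 * th (axis 2 1) 0 \<and> F (axis 2 1) 1 = m2 * th (axis 2 1) 1 \<and> F (axis 2 1) 2 = m2 * th (axis 2 1) 2 \<and> F (axis 2 1) 3 = m2 * th (axis 2 1) 3"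
    using H4[of "axis 2 1"] by blast
  have b2: "F (axis 2 1) 0 = 0" "F (axis 2 1) 1 = 0" "F (axis 2 1) 2 = m2" "F (axis 2 1) 3 = 0"
    using h2 by (simp_all only: th_axis mult_1_right mult_zero_right)
  obtain m3 where h3: "F (axis 3 1) 0 = m3 * th (axis 3 1) 0 \<and> F (axis 3 1) 1 = m3 * th (axis 3 1) 1 \<and> F (axis 3 1) 2 = m3 * th (axis 3 1) 2 \<and> F (axis 3 1) 3 = m3 * th (axis 3 1) 3"
    using H4[of "axis 3 1"] by blast
  have b3: "F (axis 3 1) 0 = 0" "F (axis 3 1) 1 = 0" "F (axis 3 1) 2 = 0" "F (axis 3 1) 3 = m3"
    using h3 by (simp_all only: th_axis mult_1_right mult_zero_right)
  obtain m4 where h4: "F (axis 4 1) 0 = m4 * th (axis 4 1) 0 \<and> F (axis 4 1) 1 = m4 * th (axis 4 1) 1 \<and> F (axis 4 1) 2 = m4 * th (axis 4 1) 2 \<and> F (axis 4 1) 3 = m4 * th (axis 4 1) 3"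
    using H4[of "axis 4 1"] by blast
  have b4: "F (axis 4 1) 0 = m4" "F (axis 4 1) 1 = 0" "F (axis 4 1) 2 = 0" "F (axis 4 1) 3 = 0"
    using h4 by (simp_all only: th_axis mult_1_right mult_zero_right)
  obtain m5 where h5: "F (axis 5 1) 0 = m5 * th (axis 5 1) 0 \<and> F (axis 5 1) 1 = m5 * th (axis 5 1) 1 \<and> F (axis 5 1) 2 = m5 * th (axis 5 1) 2 \<and> F (axis 5 1) 3 = m5 * th (axis 5 1) 3"
    using H4[of "axis 5 1"] by blast
  have b5: "F (axis 5 1) 0 = 0" "F (axis 5 1) 1 = m5 * \<i>" "F (axis 5 1) 2 = 0" "F (axis 5 1) 3 = 0"
    using h5 by (simp_all only: th_axis mult_1_right mult_zero_right)
  obtain m6 where h6: "F (axis 6 1) 0 = m6 * th (axis 6 1) 0 \<and> F (axis 6 1) 1 = m6 * th (axis 6 1) 1 \<and> F (axis 6 1) 2 = m6 * th (axis 6 1) 2 \<and> F (axis 6 1) 3 = m6 * th (axis 6 1) 3"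
    using H4[of "axis 6 1"] by blast
  have b6: "F (axis 6 1) 0 = 0" "F (axis 6 1) 1 = 0" "F (axis 6 1) 2 = m6 * \<i>" "F (axis 6 1) 3 = 0"
    using h6 by (simp_all only: th_axis mult_1_right mult_zero_right)
  obtain m7 where h7: "F (axis 7 1) 0 = m7 * th (axis 7 1) 0 \<and> F (axis 7 1) 1 = m7 * th (axis 7 1) 1 \<and> F (axis 7 1) 2 = m7 * th (axis 7 1) 2 \<and> F (axis 7 1) 3 = m7 * th (axis 7 1) 3"
    using H4[of "axis 7 1"] by blast
  have b7: "F (axis 7 1) 0 = 0" "F (axis 7 1) 1 = 0" "F (axis 7 1) 2 = 0" "F (axis 7 1) 3 = m7 * \<i>"
    using h7 by (simp_all only: th_axis mult_1_right mult_zero_right)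
  note bs = b0 b1 b2 b3 b4 b5 b6 b7
  have "m5 = m4"
  proof -
    obtain \<mu> where h: "F (axis 5 1 + axis 4 1) 1 = \<mu> * th (axis 5 1 + axis 4 1) 1"
       "F (axis 5 1 + axis 4 1) 0 = \<mu> * th (axis 5 1 + axis 4 1) 0"
      using H4[of "axis 5 1 + axis 4 1"] by blast
    have "m5 * \<i> = \<mu> * \<i>" "m4 = \<mu>"
      using h by (simp_all only: add th_add th_axis bs mult_1_right mult_zero_right add_0_right add_0_left)
    then show ?thesis by simp
  qed
  moreover have "m5 = m2"
  proof -
    obtain \<mu> where h: "F (axis 5 1 + axis 2 1) 1 = \<mu> * th (axis 5 1 + axis 2 1) 1"
       "F (axis 5 1 + axis 2 1) 2 = \<mu> * th (axis 5 1 + axis 2 1) 2"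
      using H4[of "axis 5 1 + axis 2 1"] by blast
    have "m5 * \<i> = \<mu> * \<i>" "m2 = \<mu>"
      using h by (simp_all only: add th_add th_axis bs mult_1_right mult_zero_right add_0_right add_0_left)
    then show ?thesis by simp
  qed
  moreover have "m5 = m3"
  proof -
    obtain \<mu> where h: "F (axis 5 1 + axis 3 1) 1 = \<mu> * th (axis 5 1 + axis 3 1) 1"
       "F (axis 5 1 + axis 3 1) 3 = \<mu> * th (axis 5 1 + axis 3 1) 3"
      using H4[of "axis 5 1 + axis 3 1"] by blast
    have "m5 * \<i> = \<mu> * \<i>" "m3 = \<mu>"
      using h by (simp_all only: add th_add th_axis bs mult_1_right mult_zero_right add_0_right add_0_left)
    then show ?thesis by simp
  qed
  moreover have "m0 = m1"
  proof -
    obtain \<mu> where h: "F (axis 0 1 + axis 1 1) 0 = \<mu> * th (axis 0 1 + axis 1 1) 0"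
       "F (axis 0 1 + axis 1 1) 1 = \<mu> * th (axis 0 1 + axis 1 1) 1"
      using H4[of "axis 0 1 + axis 1 1"] by blast
    have "m0 * \<i> = \<mu> * \<i>" "m1 = \<mu>"
      using h by (simp_all only: add th_add th_axis bs mult_1_right mult_zero_right add_0_right add_0_left)
    then show ?thesis by simp
  qed
  moreover have "m0 = m2"
  proof -
    obtain \<mu> where h: "F (axis 0 1 + axis 2 1) 0 = \<mu> * th (axis 0 1 + axis 2 1) 0"
       "F (axis 0 1 + axis 2 1) 2 = \<mu> * th (axis 0 1 + axis 2 1) 2"
      using H4[of "axis 0 1 + axis 2 1"] by blast
    have "m0 * \<i> = \<mu> * \<i>" "m2 = \<mu>"
      using h by (simp_all only: add th_add th_axis bs mult_1_right mult_zero_right add_0_right add_0_left)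
    then show ?thesis by simp
  qed
  moreover have "m6 = m4"
  proof -
    obtain \<mu> where h: "F (axis 6 1 + axis 4 1) 2 = \<mu> * th (axis 6 1 + axis 4 1) 2"
       "F (axis 6 1 + axis 4 1) 0 = \<mu> * th (axis 6 1 + axis 4 1) 0"
      using H4[of "axis 6 1 + axis 4 1"] by blast
    have "m6 * \<i> = \<mu> * \<i>" "m4 = \<mu>"
      using h by (simp_all only: add th_add th_axis bs mult_1_right mult_zero_right add_0_right add_0_left)
    then show ?thesis by simp
  qed
  moreover have "m7 = m4"
  proof -
    obtain \<mu> where h: "F (axis 7 1 + axis 4 1) 3 = \<mu> * th (axis 7 1 + axis 4 1) 3"
       "F (axis 7 1 + axis 4 1) 0 = \<mu> * th (axis 7 1 + axis 4 1) 0"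
      using H4[of "axis 7 1 + axis 4 1"] by blast
    have "m7 * \<i> = \<mu> * \<i>" "m4 = \<mu>"
      using h by (simp_all only: add th_add th_axis bs mult_1_right mult_zero_right add_0_right add_0_left)
    then show ?thesis by simp
  qed
  ultimately have eqs: "m0 = m4" "m1 = m4" "m2 = m4" "m3 = m4" "m5 = m4" "m6 = m4" "m7 = m4" by auto
  show ?thesis
  proof (intro exI allI impI)
    fix v :: "real^8" and k :: nat assume "k < 4"
    have "F v k = F (v$0 *\<^sub>R axis 0 1 + v$1 *\<^sub>R axis 1 1 + v$2 *\<^sub>R axis 2 1 + v$3 *\<^sub>R axis 3 1
   + v$4 *\<^sub>R axis 4 1 + v$5 *\<^sub>R axis 5 1 + v$6 *\<^sub>R axis 6 1 + v$7 *\<^sub>R axis 7 1) k"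
      using expand8[of v] by simp
    also have "\<dots> = of_real (v$0) * F (axis 0 1) k + of_real (v$1) * F (axis 1 1) k + of_real (v$2) * F (axis 2 1) k
       + of_real (v$3) * F (axis 3 1) k + of_real (v$4) * F (axis 4 1) k + of_real (v$5) * F (axis 5 1) k
       + of_real (v$6) * F (axis 6 1) k + of_real (v$7) * F (axis 7 1) k"
      by (simp add: add scl)
    also have "\<dots> = m4 * th v k"
    proof -
      have "k = 0 \<or> k = 1 \<or> k = 2 \<or> k = 3" using \<open>k<4\<close> by auto
      then show ?thesis
        by (elim disjE) (simp_all add: bs bs[unfolded One_nat_def] eqs th_def Complex_eq algebra_simps)
    qed
    finally show "F v k = m4 * th v k" .
  qed
qed




lemma sq_minus_one: "(\<mu>::complex) * \<mu> = -1 \<Longrightarrow> \<mu> = \<i> \<or> \<mu> = - \<i>"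
proof -
  assume h: "\<mu> * \<mu> = -1"
  have "(\<mu> - \<i>) * (\<mu> + \<i>) = \<mu> * \<mu> + 1" by (simp add: algebra_simps)
  also have "\<dots> = 0" using h by simp
  finally show ?thesis by (simp add: eq_neg_iff_add_eq_0)
qed

lemma J_commute_or_anti:
  assumes "A \<in> stab4 (Phi \<tau>)" "\<tau> \<noteq> 0"
  shows "(\<forall>u. A *v Jv u = Jv (A *v u)) \<or> (\<forall>u. A *v Jv u = - Jv (A *v u))"
proof -
  have inv: "invertible A" using stab_facts[OF assms] by blast
  note ImI = stab_facts(2)[OF assms]
  obtain B where AB: "A ** B = mat 1" and BA: "B ** A = mat 1" using inv unfolding invertible_def by blast
  have ab: "A *v (B *v x) = x" for x by (simp add: matrix_vector_mul_assoc AB)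
  have ba: "B *v (A *v x) = x" for x by (simp add: matrix_vector_mul_assoc BA)
  define T where "T v = A *v Jv (B *v v)" for v
  have Fadd: "th (T (x + y)) k = th (T x) k + th (T y) k" for x y k
    by (simp add: T_def matrix_vector_right_distrib Jv_add th_add)
  have Fscl: "th (T (c *\<^sub>R x)) k = complex_of_real c * th (T x) k" for c x k
    by (simp add: T_def matrix_vector_mult_scaleR Jv_scale th_scale)
  have H: "\<exists>\<mu>. \<forall>k<4. th (T v) k = \<mu> * th v k" for v
  proof (cases "v = 0")
    case True
    then show ?thesis by (simp add: T_def Jv_zero th_zero)
  next
    case False
    define u where "u = B *v v"
    have vu: "v = A *v u" using ab by (simp add: u_def)
    have "Im (Omega v (T v) x y) = 0" for x y
    proof -
      have "Im (Omega v (T v) x y) = Im (Omega (A *v u) (A *v Jv u) (A *v (B *v x)) (A *v (B *v y)))"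
        by (simp add: vu T_def ab ba)
      also have "\<dots> = Im (Omega u (Jv u) (B *v x) (B *v y))" by (rule ImI)
      also have "\<dots> = 0" by (simp add: L1)
      finally show ?thesis .
    qed
    then obtain s t where st: "T v = s *\<^sub>R v + t *\<^sub>R Jv v" using L2[OF False] by blast
    show ?thesis
    proof (intro exI allI impI)
      fix k :: nat assume "k < 4"
      show "th (T v) k = (complex_of_real s + \<i> * complex_of_real t) * th v k"
        by (simp add: st th_add th_scale th_J algebra_simps)
    qed
  qed
  obtain \<mu>0 where mu: "\<forall>v. \<forall>k<4. th (T v) k = \<mu>0 * th v k"
    using L3[of "\<lambda>v k. th (T v) k", OF Fadd Fscl H] by blast
  have neg: "A *v (- x) = - (A *v x)" for x using matrix_vector_mult_scaleR[of A "-1" x] by simp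
  have TT: "T (T v) = - v" for v
    by (simp add: T_def ba Jv_Jv ab neg)
  have "th (T (T (axis 4 1))) 0 = \<mu>0 * (\<mu>0 * th (axis 4 1) 0)" using mu by simp
  then have "\<mu>0 * \<mu>0 = -1" by (simp add: TT th_neg th_axis)
  then have mus: "\<mu>0 = \<i> \<or> \<mu>0 = - \<i>" by (rule sq_minus_one)
  have key: "th (A *v Jv u) k = \<mu>0 * th (A *v u) k" if "k < 4" for u k
  proof -
    have "th (T (A *v u)) k = \<mu>0 * th (A *v u) k" using mu that by blast
    then show ?thesis by (simp add: T_def ba)
  qed
  from mus show ?thesis
  proof
    assume "\<mu>0 = \<i>"
    then have "A *v Jv u = Jv (A *v u)" for u
      by (intro th_inj) (simp add: key th_J)
    then show ?thesis by blast
  next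
    assume "\<mu>0 = - \<i>"
    then have "A *v Jv u = - Jv (A *v u)" for u
      by (intro th_inj) (simp add: key th_J th_neg)
    then show ?thesis by blast
  qed
qed




definition Lq :: "(real^8 \<Rightarrow> real^8 \<Rightarrow> real^8 \<Rightarrow> real^8 \<Rightarrow> real) \<Rightarrow> real^8 \<Rightarrow> real^8 \<Rightarrow> real^8 \<Rightarrow> real^8 \<Rightarrow> real" where
  "Lq \<phi> x0 x1 x2 x3 = \<phi> x0 x1 x2 x3 - \<phi> (Jv x0) (Jv x1) x2 x3 - \<phi> (Jv x0) x1 (Jv x2) x3 - \<phi> (Jv x0) x1 x2 (Jv x3)
     - \<phi> x0 (Jv x1) (Jv x2) x3 - \<phi> x0 (Jv x1) x2 (Jv x3) - \<phi> x0 x1 (Jv x2) (Jv x3) + \<phi> (Jv x0) (Jv x1) (Jv x2) (Jv x3)"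

lemma Lq_Qf_zero:
  fixes \<eta> :: "real^8 \<Rightarrow> real^8 \<Rightarrow> real"
  assumes anti: "\<And>x y. \<eta> y x = - \<eta> x y"
    and jinv: "\<And>x y. \<eta> (Jv x) (Jv y) = \<eta> x y"
    and neg2: "\<And>x y. \<eta> x (- y) = - \<eta> x y"
  shows "Lq (Qf \<eta>) x0 x1 x2 x3 = 0"
proof -
  have j2: "\<eta> (Jv x) y = - \<eta> x (Jv y)" for x y
  proof -
    have "\<eta> (Jv x) y = \<eta> (Jv x) (Jv (- Jv y))" by (simp add: Jv_neg Jv_Jv)
    also have "\<dots> = \<eta> x (- Jv y)" by (rule jinv)
    finally show ?thesis by (simp add: neg2)
  qed
  show ?thesis unfolding Lq_def Qf_def jinv j2 Jv_Jv neg2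
    by (simp add: algebra_simps)
qed

lemma det4_lin2: "det4 a (\<lambda>k. c * b k) d e = c * det4 a b d e" by (simp add: det4_def algebra_simps)
lemma det4_lin3: "det4 a b (\<lambda>k. c * d k) e = c * det4 a b d e" by (simp add: det4_def algebra_simps)
lemma det4_lin4: "det4 a b d (\<lambda>k. c * e k) = c * det4 a b d e" by (simp add: det4_def algebra_simps)

lemma Lq_ReOmega: "Lq (\<lambda>y0 y1 y2 y3. Re (Omega y0 y1 y2 y3)) x0 x1 x2 x3 = 8 * Re (Omega x0 x1 x2 x3)"
proof -
  have th_J': "th (Jv x) = (\<lambda>k. \<i> * th x k)" for x by (simp add: fun_eq_iff th_J)
  show ?thesis unfolding Lq_def Omega_det th_J' det4_lin1 det4_lin2 det4_lin3 det4_lin4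
    by simp
qed

lemma th_axis4: "th (axis 4 1) = (\<lambda>k. if k = 0 then 1 else 0)"
  by (auto simp: fun_eq_iff th_def axis_def complex_eq_iff)
lemma th_axis1: "th (axis 1 1) = (\<lambda>k. if k = 1 then 1 else 0)"
  by (auto simp: fun_eq_iff th_def axis_def complex_eq_iff)
lemma th_axis2: "th (axis 2 1) = (\<lambda>k. if k = 2 then 1 else 0)"
  by (auto simp: fun_eq_iff th_def axis_def complex_eq_iff)
lemma th_axis3: "th (axis 3 1) = (\<lambda>k. if k < 3 then 0 else 1)"
  by (auto simp: fun_eq_iff th_def axis_def complex_eq_iff)

lemma Omega_P: "Omega (axis 4 1) (axis 1 1) (axis 2 1) (axis 3 1) = 1"
  by (simp add: Omega_det th_axis4 th_axis1 th_axis2 th_axis3 det4_def)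

lemma om_J: "om (Jv x) (Jv y) = om x y" by (simp add: om_def Jv_comp algebra_simps)
lemma om_inner: "om x (Jv y) = x \<bullet> y" by (simp add: om_def Jv_comp inner8 algebra_simps)
lemma om_neg2: "om x (- y) = - om x y" by (simp add: om_def)
lemma om_neg1: "om (- x) y = - om x y" by (simp add: om_def)
lemma om_add1: "om (x + y) z = om x z + om y z" by (simp add: om_def algebra_simps)
lemma om_add2: "om x (y + z) = om x y + om x z" by (simp add: om_def algebra_simps)
lemma om_scl1: "om (c *\<^sub>R x) z = c * om x z" by (simp add: om_def algebra_simps)
lemma om_scl2: "om x (c *\<^sub>R z) = c * om x z" by (simp add: om_def algebra_simps)

definition hm :: "(real^8 \<Rightarrow> real^8 \<Rightarrow> real) \<Rightarrow> (nat \<Rightarrow> real^8) \<Rightarrow> nat \<Rightarrow> nat \<Rightarrow> complex" where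
  "hm \<eta> P i j = Complex (\<eta> (P i) (Jv (P j))) (\<eta> (P i) (P j))"

lemma G_ident:
  fixes \<eta> :: "real^8 \<Rightarrow> real^8 \<Rightarrow> real"
  assumes anti: "\<And>x y. \<eta> y x = - \<eta> x y"
    and jinv: "\<And>x y. \<eta> (Jv x) (Jv y) = \<eta> x y"
    and neg2: "\<And>x y. \<eta> x (- y) = - \<eta> x y"
  shows "hm \<eta> P i i * hm \<eta> P j k - hm \<eta> P i k * hm \<eta> P j i =
     Complex (Qf \<eta> (P i) (Jv (P i)) (P j) (Jv (P k))) (Qf \<eta> (P i) (Jv (P i)) (P j) (P k))"
proof -
  have j2: "\<eta> (Jv x) y = - \<eta> x (Jv y)" for x y
  proof -
    have "\<eta> (Jv x) y = \<eta> (Jv x) (Jv (- Jv y))" by (simp add: Jv_neg Jv_Jv)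
    also have "\<dots> = \<eta> x (- Jv y)" by (rule jinv)
    finally show ?thesis by (simp add: neg2)
  qed
  have bsym: "\<eta> y (Jv x) = \<eta> x (Jv y)" for x y
    using anti[of "Jv x" y] j2[of x y] by simp
  have a0: "\<eta> x x = 0" for x using anti[of x x] by simp
  have e1: "\<eta> (P j) (P i) = - \<eta> (P i) (P j)" by (rule anti)
  have e2: "\<eta> (P j) (Jv (P i)) = \<eta> (P i) (Jv (P j))" by (rule bsym)
  have e3: "\<eta> (P k) (Jv (P i)) = \<eta> (P i) (Jv (P k))" by (rule bsym)
  show ?thesis
    unfolding hm_def Qf_def jinv j2 a0
    by (simp add: complex_eq_iff e1 e2 e3 Jv_Jv neg2 algebra_simps)
qed

lemma herm:
  fixes h :: "nat \<Rightarrow> nat \<Rightarrow> complex"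
  assumes E: "\<And>i j k. i < 4 \<Longrightarrow> j < 4 \<Longrightarrow> k < 4 \<Longrightarrow>
      h i i * h j k - h i k * h j i = (if j = k \<and> i \<noteq> j then 1 else 0)"
    and pos: "\<And>i. i < 4 \<Longrightarrow> Im (h i i) = 0 \<and> Re (h i i) > 0"
  shows "\<And>j k. j < 4 \<Longrightarrow> k < 4 \<Longrightarrow> h j k = (if j = k then 1 else 0)"
proof -
  have nz: "h i i \<noteq> 0" if "i < 4" for i using pos[OF that] by auto
  have off: "h j k = 0" if "i < 4" "j < 4" "k < 4" "i \<noteq> j" "i \<noteq> k" "j \<noteq> k" for i j k
  proof -
    have e1: "h i i * h j k = h i k * h j i" using E[of i j k] that by simp
    have e2: "h j j * h i k = h j k * h i j" using E[of j i k] that by simp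
    have e3: "h i i * h j j - h i j * h j i = 1" using E[of i j j] that by simp
    have "h j k * h i k = h j k * h i k * (h i i * h j j - h i j * h j i)" using e3 by simp
    also have "\<dots> = (h i i * h j k) * (h j j * h i k) - h j k * h i k * h i j * h j i" by (simp add: algebra_simps)
    also have "\<dots> = 0" unfolding e1 e2 by (simp add: algebra_simps)
    finally have p: "h j k * h i k = 0" .
    have "h i i * (h j k * h j k) = h i k * h j i * h j k" using e1 by (simp add: algebra_simps)
    also have "\<dots> = h j i * (h j k * h i k)" by (simp add: algebra_simps)
    also have "\<dots> = 0" using p by simp
    finally have "h j k * h j k = 0" using nz[OF that(1)] by simp
    then show ?thesis by simp
  qed
  have offd: "h j k = 0" if "j < 4" "k < 4" "j \<noteq> k" for j k
  proof -
    have "\<exists>i<4. i \<noteq> j \<and> i \<noteq> k"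
    proof (cases "j = 0 \<or> k = 0")
      case True
      then show ?thesis
      proof (cases "j = 1 \<or> k = 1")
        case True then show ?thesis using \<open>j = 0 \<or> k = 0\<close> by (intro exI[of _ 2]) auto
      next
        case False then show ?thesis by (intro exI[of _ 1]) auto
      qed
    next
      case False then show ?thesis by (intro exI[of _ 0]) auto
    qed
    then obtain i where "i < 4" "i \<noteq> j" "i \<noteq> k" by blast
    then show ?thesis using off that by blast
  qed
  have dd: "h i i * h j j = 1" if "i < 4" "j < 4" "i \<noteq> j" for i j
    using E[of i j j] that offd[of i j] by simp
  define d0 where "d0 = Re (h 0 0)"
  define d1 where "d1 = Re (h 1 1)"
  define d2 where "d2 = Re (h 2 2)"
  define d3 where "d3 = Re (h 3 3)"
  have d0: "h 0 0 = complex_of_real d0" "d0 > 0" using pos[of 0] by (simp_all add: complex_eq_iff d0_def)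
  have d1: "h 1 1 = complex_of_real d1" "d1 > 0" using pos[of 1] by (simp_all add: complex_eq_iff d1_def)
  have d2: "h 2 2 = complex_of_real d2" "d2 > 0" using pos[of 2] by (simp_all add: complex_eq_iff d2_def)
  have d3: "h 3 3 = complex_of_real d3" "d3 > 0" using pos[of 3] by (simp_all add: complex_eq_iff d3_def)
  have p01: "d0 * d1 = 1" using dd[of 0 1] d0 d1 by (simp flip: of_real_mult)
  have p02: "d0 * d2 = 1" using dd[of 0 2] d0 d2 by (simp flip: of_real_mult)
  have p12: "d1 * d2 = 1" using dd[of 1 2] d1 d2 by (simp flip: of_real_mult)
  have p03: "d0 * d3 = 1" using dd[of 0 3] d0 d3 by (simp flip: of_real_mult)
  have "d1 = d1 * (d0 * d2)" using p02 by simp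
  also have "\<dots> = (d0 * d1) * d2" by (simp add: algebra_simps)
  finally have "d1 = d2" using p01 by simp
  then have "d1 * d1 = 1" using p12 by simp
  then have "(d1 - 1) * (d1 + 1) = 0" by (simp add: algebra_simps)
  then have "d1 = 1" using d1(2) by simp
  then have "d0 = 1 \<and> d1 = 1 \<and> d2 = 1 \<and> d3 = 1" using p01 p12 p03 by simp
  then have diag: "h i i = 1" if "i < 4" for i
    using that d0 d1 d2 d3 by (auto simp: less_Suc_eq numeral_eq_Suc)
  fix j k :: nat assume "j < 4" "k < 4"
  then show "h j k = (if j = k then 1 else 0)" using diag offd by auto
qed




definition Pv :: "nat \<Rightarrow> real^8" where
  "Pv k = (if k = 0 then axis 4 1 else if k = 1 then axis 1 1 else if k = 2 then axis 2 1 else axis 3 1)"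
lemma Pv_simps: "Pv 0 = axis 4 1" "Pv 1 = axis 1 1" "Pv 2 = axis 2 1" "Pv 3 = axis 3 1" "Pv (Suc 0) = axis 1 1"
  by (simp_all add: Pv_def)
lemma Jv_axis: "Jv (axis 4 1) = axis 0 1" "Jv (axis 1 1) = axis 5 1" "Jv (axis 2 1) = axis 6 1" "Jv (axis 3 1) = axis 7 1"
  by (simp_all add: vec8_eq Jv_comp axis_def)
lemma axis_cases: "\<exists>k<4. axis a 1 = Pv k \<or> axis a 1 = Jv (Pv k)"
proof -
  have "a = 0 \<or> a = 1 \<or> a = 2 \<or> a = 3 \<or> a = 4 \<or> a = 5 \<or> a = 6 \<or> a = 7"
    using all8[of "\<lambda>a::8. a = 0 \<or> a = 1 \<or> a = 2 \<or> a = 3 \<or> a = 4 \<or> a = 5 \<or> a = 6 \<or> a = 7"] by simp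
  then show ?thesis
  proof (elim disjE)
    assume "a = 0" then show ?thesis by (intro exI[of _ 0]) (simp add: Pv_simps Jv_axis)
  next
    assume "a = 1" then show ?thesis by (intro exI[of _ 1]) (simp add: Pv_simps Jv_axis)
  next
    assume "a = 2" then show ?thesis by (intro exI[of _ 2]) (simp add: Pv_simps Jv_axis)
  next
    assume "a = 3" then show ?thesis by (intro exI[of _ 3]) (simp add: Pv_simps Jv_axis)
  next
    assume "a = 4" then show ?thesis by (intro exI[of _ 0]) (simp add: Pv_simps Jv_axis)
  next
    assume "a = 5" then show ?thesis by (intro exI[of _ 1]) (simp add: Pv_simps Jv_axis)
  next
    assume "a = 6" then show ?thesis by (intro exI[of _ 2]) (simp add: Pv_simps Jv_axis)
  next
    assume "a = 7" then show ?thesis by (intro exI[of _ 3]) (simp add: Pv_simps Jv_axis)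
  qed
qed
lemma om_ax: "om (axis a 1) (axis b 1) = (if (a = 1 \<and> b = 5) \<or> (a = 2 \<and> b = 6) \<or> (a = 3 \<and> b = 7) \<or> (a = 4 \<and> b = 0) then 1
   else if (a = 5 \<and> b = 1) \<or> (a = 6 \<and> b = 2) \<or> (a = 7 \<and> b = 3) \<or> (a = 0 \<and> b = 4) then -1 else 0)"
  by (simp add: om_def axis_def)
lemma hm_om: "i < 4 \<Longrightarrow> j < 4 \<Longrightarrow> hm om Pv i j = (if i = j then 1 else 0)"
proof -
  assume "i < 4" "j < 4"
  then have "i \<in> {0,1,2,3}" "j \<in> {0,1,2,3}" by auto
  then show ?thesis
    by (auto simp: hm_def Pv_simps om_inner om_ax inner_axis_axis complex_eq_iff)
qed

lemma bilin_eq: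
  fixes f g :: "real^8 \<Rightarrow> real^8 \<Rightarrow> real"
  assumes fa1: "\<And>x y z. f (x + y) z = f x z + f y z" and fs1: "\<And>c x z. f (c *\<^sub>R x) z = c * f x z"
    and fa2: "\<And>x y z. f x (y + z) = f x y + f x z" and fs2: "\<And>c x z. f x (c *\<^sub>R z) = c * f x z"
    and ga1: "\<And>x y z. g (x + y) z = g x z + g y z" and gs1: "\<And>c x z. g (c *\<^sub>R x) z = c * g x z"
    and ga2: "\<And>x y z. g x (y + z) = g x y + g x z" and gs2: "\<And>c x z. g x (c *\<^sub>R z) = c * g x z"
    and B: "\<And>a b. f (axis a 1) (axis b 1) = g (axis a 1) (axis b 1)"
  shows "f x y = g x y"
proof -
  have row: "f (axis a 1) y = g (axis a 1) y" for a
  proof -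
    have "f (axis a 1) y = f (axis a 1) (y$0 *\<^sub>R axis 0 1 + y$1 *\<^sub>R axis 1 1 + y$2 *\<^sub>R axis 2 1 + y$3 *\<^sub>R axis 3 1
   + y$4 *\<^sub>R axis 4 1 + y$5 *\<^sub>R axis 5 1 + y$6 *\<^sub>R axis 6 1 + y$7 *\<^sub>R axis 7 1)" using expand8[of y] by simp
    also have "\<dots> = g (axis a 1) (y$0 *\<^sub>R axis 0 1 + y$1 *\<^sub>R axis 1 1 + y$2 *\<^sub>R axis 2 1 + y$3 *\<^sub>R axis 3 1
   + y$4 *\<^sub>R axis 4 1 + y$5 *\<^sub>R axis 5 1 + y$6 *\<^sub>R axis 6 1 + y$7 *\<^sub>R axis 7 1)" by (simp add: fa2 fs2 ga2 gs2 B)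
    also have "\<dots> = g (axis a 1) y" using expand8[of y] by simp
    finally show ?thesis .
  qed
  have "f x y = f (x$0 *\<^sub>R axis 0 1 + x$1 *\<^sub>R axis 1 1 + x$2 *\<^sub>R axis 2 1 + x$3 *\<^sub>R axis 3 1
   + x$4 *\<^sub>R axis 4 1 + x$5 *\<^sub>R axis 5 1 + x$6 *\<^sub>R axis 6 1 + x$7 *\<^sub>R axis 7 1) y" using expand8[of x] by simp
  also have "\<dots> = g (x$0 *\<^sub>R axis 0 1 + x$1 *\<^sub>R axis 1 1 + x$2 *\<^sub>R axis 2 1 + x$3 *\<^sub>R axis 3 1
   + x$4 *\<^sub>R axis 4 1 + x$5 *\<^sub>R axis 5 1 + x$6 *\<^sub>R axis 6 1 + x$7 *\<^sub>R axis 7 1) y" by (simp add: fa1 fs1 ga1 gs1 row)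
  also have "\<dots> = g x y" using expand8[of x] by simp
  finally show ?thesis .
qed

lemma om_anti: "om y x = - om x y" by (simp add: om_def)

lemma stab_sub:
  assumes st: "A \<in> stab4 (Phi \<tau>)" and tau: "\<tau> \<noteq> 0"
  shows "A \<in> SU4"
proof -
  have inv: "invertible A" using stab_facts[OF st tau] by blast
  note ImI = stab_facts(2)[OF st tau]
  note ReI = stab_facts(3)[OF st tau]
  obtain B where AB: "A ** B = mat 1" and BA: "B ** A = mat 1" using inv unfolding invertible_def by blast
  have ba: "B *v (A *v x) = x" for x by (simp add: matrix_vector_mul_assoc BA)
  have neg: "A *v (- x) = - (A *v x)" for x using matrix_vector_mult_scaleR[of A "-1" x] by simp
  define \<eta> where "\<eta> x y = om (A *v x) (A *v y)" for x y
  have eanti: "\<eta> y x = - \<eta> x y" for x y by (simp add: \<eta>_def om_def)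
  have eneg2: "\<eta> x (- y) = - \<eta> x y" for x y by (simp add: \<eta>_def neg om_neg2)
  have Qeta: "Qf om (A *v y0) (A *v y1) (A *v y2) (A *v y3) = Qf \<eta> y0 y1 y2 y3" for y0 y1 y2 y3
    by (simp add: Qf_def \<eta>_def)
  have c0: "cosh (2 * \<tau>) > 0" by simp
  from J_commute_or_anti[OF st tau] show ?thesis
  proof
    assume comm: "\<forall>u. A *v Jv u = Jv (A *v u)"
    have ReI2: "Re (Omega (A *v x0) (A *v x1) (A *v x2) (A *v x3)) = Re (Omega x0 x1 x2 x3)" for x0 x1 x2 x3
      by (simp add: Kre comm[rule_format, symmetric] ImI)
    have QQ: "Qf \<eta> y0 y1 y2 y3 = Qf om y0 y1 y2 y3" for y0 y1 y2 y3
      using ReI[of y0 y1 y2 y3] ReI2[of y0 y1 y2 y3] Qeta[of y0 y1 y2 y3] by simp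
    have ejinv: "\<eta> (Jv x) (Jv y) = \<eta> x y" for x y by (simp add: \<eta>_def comm om_J)
    have E: "hm \<eta> Pv i i * hm \<eta> Pv j k - hm \<eta> Pv i k * hm \<eta> Pv j i = (if j = k \<and> i \<noteq> j then 1 else 0)"
      if "i < 4" "j < 4" "k < 4" for i j k
    proof -
      have "hm \<eta> Pv i i * hm \<eta> Pv j k - hm \<eta> Pv i k * hm \<eta> Pv j i =
          hm om Pv i i * hm om Pv j k - hm om Pv i k * hm om Pv j i"
        unfolding G_ident[of \<eta>, OF eanti ejinv eneg2] G_ident[of om, OF om_anti om_J om_neg2] QQ ..
      also have "\<dots> = (if j = k \<and> i \<noteq> j then 1 else 0)" using that by (simp add: hm_om)
      finally show ?thesis .
    qed
    have pos: "Im (hm \<eta> Pv i i) = 0 \<and> Re (hm \<eta> Pv i i) > 0" if "i < 4" for i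
    proof
      show "Im (hm \<eta> Pv i i) = 0" using eanti[of "Pv i" "Pv i"] by (simp add: hm_def)
      have "Pv i \<noteq> 0" by (simp add: Pv_def axis_eq_0_iff)
      then have "A *v Pv i \<noteq> 0" using ba[of "Pv i"] by auto
      then have "(A *v Pv i) \<bullet> (A *v Pv i) > 0" by simp
      then show "Re (hm \<eta> Pv i i) > 0" by (simp add: hm_def \<eta>_def comm om_inner)
    qed
    have H: "hm \<eta> Pv j k = (if j = k then 1 else 0)" if "j < 4" "k < 4" for j k
      using herm[of "hm \<eta> Pv", OF E pos that] .
    have ejinv2: "\<eta> (Jv x) y = - \<eta> x (Jv y)" for x y
    proof -
      have "\<eta> (Jv x) y = \<eta> (Jv x) (Jv (- Jv y))" by (simp add: Jv_neg Jv_Jv)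
      also have "\<dots> = \<eta> x (- Jv y)" by (rule ejinv)
      finally show ?thesis by (simp add: eneg2)
    qed
    have ojinv2: "om (Jv x) y = - om x (Jv y)" for x y by (simp add: om_def Jv_comp)
    have v1: "\<eta> (Pv j) (Pv k) = om (Pv j) (Pv k)" "\<eta> (Pv j) (Jv (Pv k)) = om (Pv j) (Jv (Pv k))" if "j < 4" "k < 4" for j k
    proof -
      have "hm \<eta> Pv j k = hm om Pv j k" using H[OF that] hm_om[OF that] by simp
      then show "\<eta> (Pv j) (Pv k) = om (Pv j) (Pv k)" "\<eta> (Pv j) (Jv (Pv k)) = om (Pv j) (Jv (Pv k))"
        by (simp_all add: hm_def)
    qed
    have basis: "\<eta> (axis a 1) (axis b 1) = om (axis a 1) (axis b 1)" for a b
    proof -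
      obtain j where j: "j < 4" "axis a 1 = Pv j \<or> axis a 1 = Jv (Pv j)" using axis_cases by blast
      obtain k where k: "k < 4" "axis b 1 = Pv k \<or> axis b 1 = Jv (Pv k)" using axis_cases by blast
      from j(2) k(2) show ?thesis
        by (elim disjE) (simp_all add: v1[OF j(1) k(1)] ejinv ejinv2 om_J ojinv2 Jv_Jv eneg2 om_neg2)
    qed
    have etaom: "\<eta> x y = om x y" for x y
      by (rule bilin_eq[of \<eta> om, OF _ _ _ _ om_add1 om_scl1 om_add2 om_scl2 basis])
         (simp_all add: \<eta>_def matrix_vector_right_distrib matrix_vector_mult_scaleR om_add1 om_add2 om_scl1 om_scl2)
    have "(A *v v) \<bullet> (A *v w) = v \<bullet> w" for v w
    proof -
      have "(A *v v) \<bullet> (A *v w) = om (A *v v) (Jv (A *v w))" by (simp add: om_inner)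
      also have "\<dots> = \<eta> v (Jv w)" by (simp add: \<eta>_def comm)
      also have "\<dots> = v \<bullet> w" by (simp add: etaom om_inner)
      finally show ?thesis .
    qed
    moreover have "pull2 A omega = omega"
      using etaom by (simp add: fun_eq_iff pull2_def omega_om \<eta>_def)
    moreover have "pull4 A Omega = Omega"
      by (simp add: fun_eq_iff pull4_def complex_eq_iff ReI2 ImI)
    ultimately show ?thesis using inv by (simp add: SU4_def)
  next
    assume anti: "\<forall>u. A *v Jv u = - Jv (A *v u)"
    have ReA: "Re (Omega (A *v x0) (A *v x1) (A *v x2) (A *v x3)) = - Re (Omega x0 x1 x2 x3)" for x0 x1 x2 x3
    proof -
      have "Re (Omega (A *v x0) (A *v x1) (A *v x2) (A *v x3)) = Im (Omega (Jv (A *v x0)) (A *v x1) (A *v x2) (A *v x3))"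
        by (rule Kre)
      also have "Jv (A *v x0) = - (A *v Jv x0)" using anti by simp
      also have "Im (Omega (- (A *v Jv x0)) (A *v x1) (A *v x2) (A *v x3)) = - Im (Omega (A *v Jv x0) (A *v x1) (A *v x2) (A *v x3))"
        by (simp add: Omega_neg1)
      also have "\<dots> = - Re (Omega x0 x1 x2 x3)" by (simp add: ImI Kre)
      finally show ?thesis .
    qed
    have ejinv: "\<eta> (Jv x) (Jv y) = \<eta> x y" for x y by (simp add: \<eta>_def anti om_neg1 om_neg2 om_J)
    have eq: "2 * cosh (2 * \<tau>) * Re (Omega y0 y1 y2 y3) = Qf om y0 y1 y2 y3 - Qf \<eta> y0 y1 y2 y3" for y0 y1 y2 y3
      using ReI[of y0 y1 y2 y3] ReA[of y0 y1 y2 y3] Qeta[of y0 y1 y2 y3] by (simp add: algebra_simps)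
    define x0 where "x0 = (axis 4 1 :: real^8)"
    define x1 where "x1 = (axis 1 1 :: real^8)"
    define x2 where "x2 = (axis 2 1 :: real^8)"
    define x3 where "x3 = (axis 3 1 :: real^8)"
    have L1': "Lq (Qf om) x0 x1 x2 x3 = 0" by (rule Lq_Qf_zero[OF om_anti om_J om_neg2])
    have L2': "Lq (Qf \<eta>) x0 x1 x2 x3 = 0" by (rule Lq_Qf_zero[OF eanti ejinv eneg2])
    have L3': "Lq (\<lambda>y0 y1 y2 y3. Re (Omega y0 y1 y2 y3)) x0 x1 x2 x3 = 8" 
      unfolding Lq_ReOmega by (simp add: x0_def x1_def x2_def x3_def Omega_P)
    have s1: "Lq (\<lambda>y0 y1 y2 y3. 2 * cosh (2 * \<tau>) * Re (Omega y0 y1 y2 y3)) x0 x1 x2 x3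
       = 2 * cosh (2 * \<tau>) * Lq (\<lambda>y0 y1 y2 y3. Re (Omega y0 y1 y2 y3)) x0 x1 x2 x3"
      by (simp add: Lq_def algebra_simps)
    have s2: "Lq (\<lambda>y0 y1 y2 y3. 2 * cosh (2 * \<tau>) * Re (Omega y0 y1 y2 y3)) x0 x1 x2 x3
       = Lq (\<lambda>y0 y1 y2 y3. Qf om y0 y1 y2 y3 - Qf \<eta> y0 y1 y2 y3) x0 x1 x2 x3"
      by (simp only: eq)
    have s3: "Lq (\<lambda>y0 y1 y2 y3. Qf om y0 y1 y2 y3 - Qf \<eta> y0 y1 y2 y3) x0 x1 x2 x3
       = Lq (Qf om) x0 x1 x2 x3 - Lq (Qf \<eta>) x0 x1 x2 x3"
      by (simp add: Lq_def algebra_simps)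
    have "2 * cosh (2 * \<tau>) * 8 = 0"
      using s1 s2 s3 L1' L2' L3' by simp
    with c0 show ?thesis by simp
  qed
qed

lemma sub_stab:
  assumes "A \<in> SU4"
  shows "A \<in> stab4 (Phi \<tau>)"
proof -
  have inv: "invertible A" and om2: "pull2 A omega = omega" and Om: "pull4 A Omega = Omega"
    using assms by (auto simp: SU4_def)
  have omi: "om (A *v x) (A *v y) = om x y" for x y
    using fun_cong[OF fun_cong[OF om2], of x y] by (simp add: pull2_def omega_om)
  have Omi: "Omega (A *v v0) (A *v v1) (A *v v2) (A *v v3) = Omega v0 v1 v2 v3" for v0 v1 v2 v3
    using fun_cong[OF fun_cong[OF fun_cong[OF fun_cong[OF Om]]], of v0 v1 v2 v3] by (simp add: pull4_def)
  have "pull4 A (Phi \<tau>) = Phi \<tau>"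
    by (simp add: fun_eq_iff pull4_def Phi_eq Omi Qf_def omi)
  then show ?thesis using inv by (simp add: stab4_def)
qed

theorem mainTheorem7:
  fixes \<tau> :: real
  assumes "\<tau> \<noteq> 0"
  shows "stab4 (Phi \<tau>) = SU4"
  using stab_sub[OF _ assms] sub_stab by blast


end
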